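(* Let $n\ge 2$ and let $NF_n$ be the complex Leibniz algebra with basis $\{e_1,\dots,e_n\}$ and nonzero products $[e_i,e_1]=e_{i+1}$, $1\le i\le n-1$. A pair $(d,D)$ of linear maps of $NF_n$ is a biderivation if and only if there exist $\alpha_1,\dots,\alpha_n,\beta_2,\dots,\beta_n\in\mathbb C$ such that $$d(e_i)=i\alpha_1e_i+\sum_{j=i+1}^n\alpha_{j-i+1}e_j\ (1\le i\le n),\qquad D(e_1)=\alpha_1e_1+\sum_{j=2}^n\beta_je_j,\qquad D(e_i)=0\ (2\le i\le n).$$
   Context: All algebras are over $\mathbb C$. A (right) Leibniz algebra is a vector space $L$ with bilinear bracket satisfying $[x,[y,z]]=[[x,y],z]-[[x,z],y]$. Unlisted products of basis elements are zero. A derivation is a linear map $d$ with $d([x,y])=[d(x),y]+[x,d(y)]$; an anti-derivation is a linear map $D$ with $D([x,y])=[D(x),y]-[D(y),x]$. A biderivation of $L$ is a pair $(d,D)$ with $d$ a derivation, $D$ an anti-derivation, and $[x,d(y)]=[x,D(y)]$ for all $x,y\in L$. *)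

theory Defs
  imports Main "HOL-Analysis.Analysis"
begin

text \<open>The algebra NF_n is modelled on coordinate vectors v :: nat => complex
  supported on {1..n}; coordinate k is the coefficient of basis vector e_k.\<close>

definition nf_space :: "nat \<Rightarrow> (nat \<Rightarrow> complex) set" where
  "nf_space n = {v. \<forall>k. k \<notin> {1..n} \<longrightarrow> v k = 0}"

definition nf_basis :: "nat \<Rightarrow> nat \<Rightarrow> complex" where
  "nf_basis i = (\<lambda>k. if k = i then 1 else 0)"

definition nf_bracket :: "nat \<Rightarrow> (nat \<Rightarrow> complex) \<Rightarrow> (nat \<Rightarrow> complex) \<Rightarrow> (nat \<Rightarrow> complex)" where
  "nf_bracket n x y =
     (\<lambda>k. \<Sum>i\<in>{1..n}. \<Sum>j\<in>{1..n}.
        x i * y j * (if j = 1 \<and> i \<le> n - 1 then nf_basis (i + 1) k else 0))"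

definition nf_linear :: "nat \<Rightarrow> ((nat \<Rightarrow> complex) \<Rightarrow> (nat \<Rightarrow> complex)) \<Rightarrow> bool" where
  "nf_linear n f \<longleftrightarrow>
     (\<forall>x\<in>nf_space n. f x \<in> nf_space n) \<and>
     (\<forall>x\<in>nf_space n. \<forall>y\<in>nf_space n. f (\<lambda>k. x k + y k) = (\<lambda>k. f x k + f y k)) \<and>
     (\<forall>c. \<forall>x\<in>nf_space n. f (\<lambda>k. c * x k) = (\<lambda>k. c * f x k))"

definition nf_derivation :: "nat \<Rightarrow> ((nat \<Rightarrow> complex) \<Rightarrow> (nat \<Rightarrow> complex)) \<Rightarrow> bool" where
  "nf_derivation n d \<longleftrightarrow> nf_linear n d \<and>
     (\<forall>x\<in>nf_space n. \<forall>y\<in>nf_space n.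
        d (nf_bracket n x y) = (\<lambda>k. nf_bracket n (d x) y k + nf_bracket n x (d y) k))"

definition nf_antiderivation :: "nat \<Rightarrow> ((nat \<Rightarrow> complex) \<Rightarrow> (nat \<Rightarrow> complex)) \<Rightarrow> bool" where
  "nf_antiderivation n D \<longleftrightarrow> nf_linear n D \<and>
     (\<forall>x\<in>nf_space n. \<forall>y\<in>nf_space n.
        D (nf_bracket n x y) = (\<lambda>k. nf_bracket n (D x) y k - nf_bracket n (D y) x k))"

definition nf_biderivation :: "nat \<Rightarrow> ((nat \<Rightarrow> complex) \<Rightarrow> (nat \<Rightarrow> complex))
     \<Rightarrow> ((nat \<Rightarrow> complex) \<Rightarrow> (nat \<Rightarrow> complex)) \<Rightarrow> bool" where
  "nf_biderivation n d D \<longleftrightarrow> nf_derivation n d \<and> nf_antiderivation n D \<and>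
     (\<forall>x\<in>nf_space n. \<forall>y\<in>nf_space n. nf_bracket n x (d y) = nf_bracket n x (D y))"

end

theory Submission
  imports Defs
begin

lemma bracket_eq:
  assumes "n \<ge> 1"
  shows "nf_bracket n x y = (\<lambda>k. y 1 * (if 2 \<le> k \<and> k \<le> n then x (k - 1) else 0))"
proof
  fix k
  have inner: "(\<Sum>j\<in>{1..n}. x i * y j * (if j = 1 \<and> i \<le> n - 1 then nf_basis (i + 1) k else 0))
      = (if i \<le> n - 1 \<and> k = i + 1 then x i * y 1 else 0)" for i
  proof -
    have "(\<Sum>j\<in>{1..n}. x i * y j * (if j = 1 \<and> i \<le> n - 1 then nf_basis (i + 1) k else 0))
       = (\<Sum>j\<in>{1..n}. if j = 1 then x i * y 1 * (if i \<le> n - 1 then nf_basis (i + 1) k else 0) else 0)"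
      by (rule sum.cong) auto
    also have "\<dots> = x i * y 1 * (if i \<le> n - 1 then nf_basis (i + 1) k else 0)"
      using assms by (simp add: sum.delta)
    finally show ?thesis by (auto simp: nf_basis_def)
  qed
  have "nf_bracket n x y k = (\<Sum>i\<in>{1..n}. if i = k - 1 then (if i \<le> n - 1 \<and> k = i + 1 then x i * y 1 else 0) else 0)"
    unfolding nf_bracket_def inner by (rule sum.cong) auto
  also have "\<dots> = y 1 * (if 2 \<le> k \<and> k \<le> n then x (k - 1) else 0)"
    by (subst sum.delta) auto
  finally show "nf_bracket n x y k = y 1 * (if 2 \<le> k \<and> k \<le> n then x (k - 1) else 0)" .
qed

lemma basis_space: "i \<in> {1..n} \<Longrightarrow> nf_basis i \<in> nf_space n"
  by (auto simp: nf_space_def nf_basis_def)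

lemma sum_space: "A \<subseteq> {1..n} \<Longrightarrow> (\<lambda>k. \<Sum>i\<in>A. c i * nf_basis i k) \<in> nf_space n"
  unfolding nf_space_def nf_basis_def by (auto intro!: sum.neutral)

lemma lin_sum:
  assumes "nf_linear n f" "finite A" "A \<subseteq> {1..n}"
  shows "f (\<lambda>k. \<Sum>i\<in>A. c i * nf_basis i k) = (\<lambda>k. \<Sum>i\<in>A. c i * f (nf_basis i) k)"
  using assms(2,3)
proof (induction A rule: finite_induct)
  case empty
  have z: "(\<lambda>k. 0::complex) \<in> nf_space n" by (simp add: nf_space_def)
  have "\<forall>c. \<forall>x\<in>nf_space n. f (\<lambda>k. c * x k) = (\<lambda>k. c * f x k)"
    using assms(1) unfolding nf_linear_def by blast
  from this[rule_format, OF z, of 0] show ?case by simp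
next
  case (insert a A)
  have a: "a \<in> {1..n}" and A: "A \<subseteq> {1..n}" using insert by auto
  have s1: "(\<lambda>k. c a * nf_basis a k) \<in> nf_space n" using basis_space[OF a] by (auto simp: nf_space_def)
  have s2: "(\<lambda>k. \<Sum>i\<in>A. c i * nf_basis i k) \<in> nf_space n" using sum_space[OF A] .
  have "f (\<lambda>k. \<Sum>i\<in>insert a A. c i * nf_basis i k)
      = f (\<lambda>k. (\<lambda>k. c a * nf_basis a k) k + (\<lambda>k. \<Sum>i\<in>A. c i * nf_basis i k) k)"
    using insert by simp
  also have "\<dots> = (\<lambda>k. f (\<lambda>k. c a * nf_basis a k) k + f (\<lambda>k. \<Sum>i\<in>A. c i * nf_basis i k) k)"
  proof -
    have "\<forall>x\<in>nf_space n. \<forall>y\<in>nf_space n. f (\<lambda>k. x k + y k) = (\<lambda>k. f x k + f y k)"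
      using assms(1) unfolding nf_linear_def by blast
    from this[rule_format, OF s1 s2] show ?thesis by simp
  qed
  also have "f (\<lambda>k. c a * nf_basis a k) = (\<lambda>k. c a * f (nf_basis a) k)"
    using assms(1) basis_space[OF a] unfolding nf_linear_def by blast
  finally show ?case using insert by simp
qed

lemma expand: "x \<in> nf_space n \<Longrightarrow> x = (\<lambda>k. \<Sum>i\<in>{1..n}. x i * nf_basis i k)"
proof
  fix k assume x: "x \<in> nf_space n"
  have "(\<Sum>i\<in>{1..n}. x i * nf_basis i k) = (\<Sum>i\<in>{1..n}. if k = i then x k else 0)"
    by (rule sum.cong) (auto simp: nf_basis_def)
  also have "\<dots> = x k" using x by (auto simp: nf_space_def)
  finally show "x k = (\<Sum>i\<in>{1..n}. x i * nf_basis i k)" by simp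
qed

lemma lin_expand:
  assumes "nf_linear n f" "x \<in> nf_space n"
  shows "f x = (\<lambda>k. \<Sum>i\<in>{1..n}. x i * f (nf_basis i) k)"
  using lin_sum[OF assms(1), of "{1..n}" x] expand[OF assms(2)] by simp


definition sh :: "nat \<Rightarrow> (nat \<Rightarrow> complex) \<Rightarrow> nat \<Rightarrow> complex" where
  "sh n x k = (if 2 \<le> k \<and> k \<le> n then x (k - 1) else 0)"

lemma br: "n \<ge> 1 \<Longrightarrow> nf_bracket n x y = (\<lambda>k. y 1 * sh n x k)"
  using bracket_eq[of n x y] by (simp add: sh_def)

lemma sum_basis: "finite A \<Longrightarrow> (\<Sum>j\<in>A. c j * nf_basis j k) = (if k \<in> A then c k else 0)"
proof -
  assume "finite A"
  have "(\<Sum>j\<in>A. c j * nf_basis j k) = (\<Sum>j\<in>A. if k = j then c k else 0)"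
    by (rule sum.cong) (auto simp: nf_basis_def)
  then show ?thesis using \<open>finite A\<close> by simp
qed

definition FF :: "nat \<Rightarrow> (nat \<Rightarrow> complex) \<Rightarrow> nat \<Rightarrow> nat \<Rightarrow> complex" where
  "FF n \<alpha> i k = (if k = i then of_nat i * \<alpha> 1 else if i < k \<and> k \<le> n then \<alpha> (k - i + 1) else 0)"

lemma formula_eq:
  "(\<lambda>k. of_nat i * \<alpha> 1 * nf_basis i k + (\<Sum>j\<in>{i+1..n}. \<alpha> (j - i + 1) * nf_basis j k)) = FF n \<alpha> i"
  apply (rule ext)
  apply (subst sum_basis)
   apply simp
  apply (auto simp: FF_def nf_basis_def)
  done

lemma shift_sum:
  assumes "2 \<le> k" "k \<le> n"
  shows "(\<Sum>i\<in>{1..<k}. sh n x i * a (k - i + 1)) = (\<Sum>i\<in>{1..<k-1}. x i * a (k - 1 - i + 1))"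
proof -
  obtain m where k: "k = Suc m" and m: "m \<ge> 1" using assms by (cases k) auto
  have "{1..<Suc m} = insert 1 {Suc 1..<Suc m}" using m by auto
  then have "(\<Sum>i\<in>{1..<k}. sh n x i * a (k - i + 1)) = sh n x 1 * a (k - 1 + 1) + (\<Sum>i\<in>{Suc 1..<Suc m}. sh n x i * a (k - i + 1))"
    using k by simp
  also have "sh n x 1 = 0" by (simp add: sh_def)
  also have "(\<Sum>i\<in>{Suc 1..<Suc m}. sh n x i * a (k - i + 1)) = (\<Sum>i\<in>{1..<m}. sh n x (Suc i) * a (k - Suc i + 1))"
    by (rule sum.shift_bounds_Suc_ivl)
  also have "\<dots> = (\<Sum>i\<in>{1..<k-1}. x i * a (k - 1 - i + 1))"
    using k assms by (intro sum.cong) (auto simp: sh_def)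
  finally show ?thesis by simp
qed

lemma dform:
  "(\<Sum>i\<in>{1..n}. x i * FF n \<alpha> i k) =
     (if 1 \<le> k \<and> k \<le> n then of_nat k * \<alpha> 1 * x k + (\<Sum>i\<in>{1..<k}. x i * \<alpha> (k - i + 1)) else 0)"
proof (cases "1 \<le> k \<and> k \<le> n")
  case True
  have "(\<Sum>i\<in>{1..n}. x i * FF n \<alpha> i k) =
     (\<Sum>i\<in>{1..n}. (if k = i then of_nat k * \<alpha> 1 * x k else 0) + (if i \<in> {1..<k} then x i * \<alpha> (k - i + 1) else 0))"
    using True by (intro sum.cong) (auto simp: FF_def)
  also have "\<dots> = (\<Sum>i\<in>{1..n}. if k = i then of_nat k * \<alpha> 1 * x k else 0) + (\<Sum>i\<in>{1..n}. if i \<in> {1..<k} then x i * \<alpha> (k - i + 1) else 0)"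
    by (rule sum.distrib)
  also have "(\<Sum>i\<in>{1..n}. if k = i then of_nat k * \<alpha> 1 * x k else 0) = of_nat k * \<alpha> 1 * x k"
    using True by simp
  also have "(\<Sum>i\<in>{1..n}. if i \<in> {1..<k} then x i * \<alpha> (k - i + 1) else 0) = (\<Sum>i\<in>{1..n} \<inter> {1..<k}. x i * \<alpha> (k - i + 1))"
    by (simp only: sum.inter_restrict finite_atLeastAtMost)
  also have "{1..n} \<inter> {1..<k} = {1..<k}" using True by auto
  finally show ?thesis using True by simp
next
  case False
  then show ?thesis by (auto simp: FF_def intro!: sum.neutral)
qed

theorem mainTheorem2:
  fixes n :: nat and d D :: "(nat \<Rightarrow> complex) \<Rightarrow> (nat \<Rightarrow> complex)"
  assumes "n \<ge> 2" and "nf_linear n d" and "nf_linear n D"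
  shows "nf_biderivation n d D \<longleftrightarrow>
    (\<exists>\<alpha> \<beta> :: nat \<Rightarrow> complex.
      (\<forall>i\<in>{1..n}. d (nf_basis i) =
         (\<lambda>k. of_nat i * \<alpha> 1 * nf_basis i k + (\<Sum>j\<in>{i+1..n}. \<alpha> (j - i + 1) * nf_basis j k))) \<and>
      D (nf_basis 1) = (\<lambda>k. \<alpha> 1 * nf_basis 1 k + (\<Sum>j\<in>{2..n}. \<beta> j * nf_basis j k)) \<and>
      (\<forall>i\<in>{2..n}. D (nf_basis i) = (\<lambda>k. 0)))"
proof -
  have n1: "n \<ge> 1" using assms(1) by simp
  have dsp: "d x \<in> nf_space n" if "x \<in> nf_space n" for x
    using assms(2) that unfolding nf_linear_def by blast
  have Dsp: "D x \<in> nf_space n" if "x \<in> nf_space n" for x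
    using assms(3) that unfolding nf_linear_def by blast
  have brsp: "(\<lambda>k. y 1 * sh n x k) \<in> nf_space n" for x y
    by (auto simp: nf_space_def sh_def)
  have ebr: "nf_basis (Suc i) = (\<lambda>k. nf_basis 1 1 * sh n (nf_basis i) k)" if "1 \<le> i" "Suc i \<le> n" for i
    using that by (auto simp: nf_basis_def sh_def fun_eq_iff)
  have bsp: "nf_basis i \<in> nf_space n" if "1 \<le> i" "i \<le> n" for i using basis_space that by auto
  show ?thesis
  proof
    assume B: "nf_biderivation n d D"
    have der: "d (\<lambda>k. y 1 * sh n x k) = (\<lambda>k. d y 1 * sh n x k + y 1 * sh n (d x) k)"
      if "x \<in> nf_space n" "y \<in> nf_space n" for x y
      using B that unfolding nf_biderivation_def nf_derivation_def br[OF n1] by (auto simp: algebra_simps)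
    have anti: "D (\<lambda>k. y 1 * sh n x k) = (\<lambda>k. y 1 * sh n (D x) k - x 1 * sh n (D y) k)"
      if "x \<in> nf_space n" "y \<in> nf_space n" for x y
      using B that unfolding nf_biderivation_def nf_antiderivation_def br[OF n1] by auto
    have bi: "(\<lambda>k. d y 1 * sh n x k) = (\<lambda>k. D y 1 * sh n x k)"
      if "x \<in> nf_space n" "y \<in> nf_space n" for x y
      using B that unfolding nf_biderivation_def br[OF n1] by auto
    define \<alpha> where "\<alpha> = d (nf_basis 1)"
    define \<beta> where "\<beta> = D (nf_basis 1)"
    have e1: "nf_basis 1 \<in> nf_space n" using bsp n1 by auto
    have dF: "d (nf_basis i) = FF n \<alpha> i" if "1 \<le> i" "i \<le> n" for i
      using that
    proof (induction i rule: nat_induct_at_least)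
      case base
      show ?case using dsp[OF e1] unfolding \<alpha>_def
        by (auto simp: FF_def nf_space_def)
    next
      case (Suc i)
      have "d (nf_basis (Suc i)) = d (\<lambda>k. nf_basis 1 1 * sh n (nf_basis i) k)"
        using ebr Suc by simp
      also have "\<dots> = (\<lambda>k. \<alpha> 1 * sh n (nf_basis i) k + sh n (FF n \<alpha> i) k)"
        using der[OF bsp e1, of i] Suc unfolding \<alpha>_def by (simp add: nf_basis_def)
      also have "\<dots> = FF n \<alpha> (Suc i)"
      proof (rule ext)
        fix k
        show "\<alpha> 1 * sh n (nf_basis i) k + sh n (FF n \<alpha> i) k = FF n \<alpha> (Suc i) k"
        proof (cases "2 \<le> k \<and> k \<le> n")
          case True
          then obtain m where m: "k = Suc m" by (cases k) auto
          have e: "m - i + 1 = Suc m - Suc i + 1" using m by simp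
          show ?thesis using True Suc.hyps unfolding m sh_def FF_def nf_basis_def e
            by (auto simp: algebra_simps)
        next
          case False
          then show ?thesis using Suc by (auto simp: sh_def FF_def)
        qed
      qed
      finally show ?case .
    qed
    have b1: "\<beta> 1 = \<alpha> 1"
    proof -
      have "d (nf_basis 1) 1 * sh n (nf_basis 1) 2 = D (nf_basis 1) 1 * sh n (nf_basis 1) 2"
        using fun_cong[OF bi[OF e1 e1], of 2] .
      moreover have "sh n (nf_basis 1) 2 = 1" using assms(1) by (simp add: sh_def nf_basis_def)
      ultimately show ?thesis unfolding \<alpha>_def \<beta>_def by simp
    qed
    have D0: "D (nf_basis i) = (\<lambda>k. 0)" if "2 \<le> i" "i \<le> n" for i
      using that
    proof (induction i rule: nat_induct_at_least)
      case base
      have "D (nf_basis 2) = D (\<lambda>k. nf_basis 1 1 * sh n (nf_basis 1) k)"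
        using ebr[of 1] base by (simp add: numeral_2_eq_2)
      also have "\<dots> = (\<lambda>k. 0)"
        using anti[OF e1 e1] by simp
      finally show ?case .
    next
      case (Suc i)
      have "D (nf_basis (Suc i)) = D (\<lambda>k. nf_basis 1 1 * sh n (nf_basis i) k)"
        using ebr Suc by simp
      also have "\<dots> = (\<lambda>k. 0)"
      proof -
        have "nf_basis i 1 = 0" using Suc by (simp add: nf_basis_def)
        then show ?thesis using anti[OF bsp e1, of i] Suc by (simp add: sh_def)
      qed
      finally show ?case .
    qed
    show "\<exists>\<alpha> \<beta> :: nat \<Rightarrow> complex.
      (\<forall>i\<in>{1..n}. d (nf_basis i) =
         (\<lambda>k. of_nat i * \<alpha> 1 * nf_basis i k + (\<Sum>j\<in>{i+1..n}. \<alpha> (j - i + 1) * nf_basis j k))) \<and>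
      D (nf_basis 1) = (\<lambda>k. \<alpha> 1 * nf_basis 1 k + (\<Sum>j\<in>{2..n}. \<beta> j * nf_basis j k)) \<and>
      (\<forall>i\<in>{2..n}. D (nf_basis i) = (\<lambda>k. 0))"
    proof (intro exI conjI ballI)
      fix i assume "i \<in> {1..n}"
      then show "d (nf_basis i) =
         (\<lambda>k. of_nat i * \<alpha> 1 * nf_basis i k + (\<Sum>j\<in>{i+1..n}. \<alpha> (j - i + 1) * nf_basis j k))"
        using dF formula_eq by simp
    next
      show "D (nf_basis 1) = (\<lambda>k. \<alpha> 1 * nf_basis 1 k + (\<Sum>j\<in>{2..n}. \<beta> j * nf_basis j k))"
      proof (rule ext)
        fix k
        have "(\<Sum>j\<in>{2..n}. \<beta> j * nf_basis j k) = (if k \<in> {2..n} then \<beta> k else 0)"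
          by (rule sum_basis) simp
        then show "D (nf_basis 1) k = \<alpha> 1 * nf_basis 1 k + (\<Sum>j\<in>{2..n}. \<beta> j * nf_basis j k)"
          using Dsp[OF e1] b1 unfolding \<beta>_def by (auto simp: nf_basis_def nf_space_def)
      qed
    next
      fix i assume "i \<in> {2..n}"
      then show "D (nf_basis i) = (\<lambda>k. 0)" using D0 by simp
    qed
  next
    assume "\<exists>\<alpha> \<beta> :: nat \<Rightarrow> complex.
      (\<forall>i\<in>{1..n}. d (nf_basis i) =
         (\<lambda>k. of_nat i * \<alpha> 1 * nf_basis i k + (\<Sum>j\<in>{i+1..n}. \<alpha> (j - i + 1) * nf_basis j k))) \<and>
      D (nf_basis 1) = (\<lambda>k. \<alpha> 1 * nf_basis 1 k + (\<Sum>j\<in>{2..n}. \<beta> j * nf_basis j k)) \<and>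
      (\<forall>i\<in>{2..n}. D (nf_basis i) = (\<lambda>k. 0))"
    then obtain \<alpha> \<beta> :: "nat \<Rightarrow> complex" where
      H1: "\<forall>i\<in>{1..n}. d (nf_basis i) =
         (\<lambda>k. of_nat i * \<alpha> 1 * nf_basis i k + (\<Sum>j\<in>{i+1..n}. \<alpha> (j - i + 1) * nf_basis j k))" and
      H2: "D (nf_basis 1) = (\<lambda>k. \<alpha> 1 * nf_basis 1 k + (\<Sum>j\<in>{2..n}. \<beta> j * nf_basis j k))" and
      H3: "\<forall>i\<in>{2..n}. D (nf_basis i) = (\<lambda>k. 0)" by blast
    have dF: "d (nf_basis i) = FF n \<alpha> i" if "i \<in> {1..n}" for i
      using H1 that formula_eq by simp
    have dx: "d x = (\<lambda>k. if 1 \<le> k \<and> k \<le> n then of_nat k * \<alpha> 1 * x k + (\<Sum>i\<in>{1..<k}. x i * \<alpha> (k - i + 1)) else 0)"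
      if "x \<in> nf_space n" for x
    proof -
      have "d x = (\<lambda>k. \<Sum>i\<in>{1..n}. x i * FF n \<alpha> i k)"
        using lin_expand[OF assms(2) that] dF by simp
      then show ?thesis using dform[of x n \<alpha>] by (simp only:)
    qed
    define G where "G = D (nf_basis 1)"
    have G1: "G 1 = \<alpha> 1" unfolding G_def H2 by (simp add: sum_basis nf_basis_def)
    have Dx: "D x = (\<lambda>k. x 1 * G k)" if "x \<in> nf_space n" for x
    proof -
      have "D x = (\<lambda>k. \<Sum>i\<in>{1..n}. x i * D (nf_basis i) k)"
        using lin_expand[OF assms(3) that] .
      also have "\<dots> = (\<lambda>k. \<Sum>i\<in>{1..n}. if i = 1 then x 1 * G k else 0)"
        using H3 unfolding G_def by (intro ext sum.cong) auto
      also have "\<dots> = (\<lambda>k. x 1 * G k)" using n1 by simp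
      finally show ?thesis .
    qed
    have d1: "d y 1 = \<alpha> 1 * y 1" if "y \<in> nf_space n" for y
      using dx[OF that] n1 by simp
    have "nf_derivation n d"
      unfolding nf_derivation_def br[OF n1]
    proof (intro conjI ballI assms(2) ext)
      fix x y k assume x: "x \<in> nf_space n" and y: "y \<in> nf_space n"
      have dxs: "d x \<in> nf_space n" using dsp x .
      show "d (\<lambda>k. y 1 * sh n x k) k = y 1 * sh n (d x) k + d y 1 * sh n x k"
      proof (cases "2 \<le> k \<and> k \<le> n")
        case True
        have L: "d (\<lambda>k. y 1 * sh n x k) k = of_nat k * \<alpha> 1 * (y 1 * x (k - 1))
            + y 1 * (\<Sum>i\<in>{1..<k}. sh n x i * \<alpha> (k - i + 1))"
        proof -
          have "d (\<lambda>k. y 1 * sh n x k) k = of_nat k * \<alpha> 1 * (y 1 * sh n x k) + (\<Sum>i\<in>{1..<k}. (y 1 * sh n x i) * \<alpha> (k - i + 1))"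
            using dx[OF brsp, of y x] True by simp
          also have "(\<Sum>i\<in>{1..<k}. (y 1 * sh n x i) * \<alpha> (k - i + 1)) = y 1 * (\<Sum>i\<in>{1..<k}. sh n x i * \<alpha> (k - i + 1))"
            by (simp add: sum_distrib_left mult_ac)
          also have "sh n x k = x (k - 1)" using True by (simp add: sh_def)
          finally show ?thesis by simp
        qed
        obtain m where m: "k = Suc m" using True by (cases k) auto
        have c: "1 \<le> m \<and> m \<le> n" using True m by simp
        have R: "sh n (d x) k = of_nat m * \<alpha> 1 * x m + (\<Sum>i\<in>{1..<m}. x i * \<alpha> (m - i + 1))"
        proof -
          have "sh n (d x) k = d x m" using True m by (simp add: sh_def)
          also have "\<dots> = of_nat m * \<alpha> 1 * x m + (\<Sum>i\<in>{1..<m}. x i * \<alpha> (m - i + 1))"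
            using c by (subst dx[OF x]) simp
          finally show ?thesis .
        qed
        have S: "(\<Sum>i\<in>{1..<k}. sh n x i * \<alpha> (k - i + 1)) = (\<Sum>i\<in>{1..<m}. x i * \<alpha> (m - i + 1))"
          using shift_sum[OF conjunct1[OF True] conjunct2[OF True], of x \<alpha>] m by simp
        have X: "sh n x k = x m" using True m by (simp add: sh_def)
        show ?thesis unfolding L R S X d1[OF y]
          using m by (simp add: algebra_simps)
      next
        case False
        have e: "d (\<lambda>k. y 1 * sh n x k) k = (if 1 \<le> k \<and> k \<le> n then of_nat k * \<alpha> 1 * (y 1 * sh n x k) + (\<Sum>i\<in>{1..<k}. (y 1 * sh n x i) * \<alpha> (k - i + 1)) else 0)"
          using dx[OF brsp, of y x] by simp
        have z1: "sh n x k = 0" "sh n (d x) k = 0" using False by (auto simp: sh_def)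
        have "k = 1 \<or> \<not> (1 \<le> k \<and> k \<le> n)" using False by auto
        then show ?thesis
        proof
          assume "k = 1" then show ?thesis using e z1 by simp
        next
          assume h: "\<not> (1 \<le> k \<and> k \<le> n)"
          have "d (\<lambda>k. y 1 * sh n x k) k = 0" using e by (simp only: if_not_P[OF h])
          then show ?thesis using z1 by simp
        qed
      qed
    qed
    moreover have "nf_antiderivation n D"
      unfolding nf_antiderivation_def br[OF n1]
    proof (intro conjI ballI assms(3) ext)
      fix x y k assume x: "x \<in> nf_space n" and y: "y \<in> nf_space n"
      have s1: "sh n x 1 = 0" by (simp add: sh_def)
      have "D (\<lambda>k. y 1 * sh n x k) k = (y 1 * sh n x 1) * G k"
        by (subst Dx[OF brsp]) simp
      also have "\<dots> = 0" using s1 by simp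
      also have "0 = y 1 * sh n (D x) k - x 1 * sh n (D y) k"
        unfolding Dx[OF x] Dx[OF y] by (simp add: sh_def)
      finally show "D (\<lambda>k. y 1 * sh n x k) k = y 1 * sh n (D x) k - x 1 * sh n (D y) k" .
    qed
    moreover have "\<forall>x\<in>nf_space n. \<forall>y\<in>nf_space n. nf_bracket n x (d y) = nf_bracket n x (D y)"
      unfolding br[OF n1]
    proof (intro ballI ext)
      fix x y k assume x: "x \<in> nf_space n" and y: "y \<in> nf_space n"
      show "d y 1 * sh n x k = D y 1 * sh n x k"
        unfolding d1[OF y] Dx[OF y] G1 by (simp add: mult_ac)
    qed
    ultimately show "nf_biderivation n d D" unfolding nf_biderivation_def by blast
  qed
qed

end
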